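(* Let $(X,d)$ be a metric space, $\mu$ a Borel probability measure on $X$ with no atoms, and $T:X\to X$ a measurable map preserving $\mu$. (a) Let $B(y,r)=\{x:d(x,y)\le r\}$ be closed balls, and suppose every decreasing sequence of closed balls $A_n=B(y,r_n)$ with common center and $\sum_n\mu(A_n)=\infty$ is strongly Borel–Cantelli. Then for every $y\in X$, for $\mu$-a.e. $x$, $$\liminf_{r\to0}\frac{\log\tau_{B(y,r)}(x)}{-\log r}=\underline d_\mu(y),\qquad \limsup_{r\to0}\frac{\log\tau_{B(y,r)}(x)}{-\log r}=\overline d_\mu(y).$$ (b) Suppose every decreasing sequence of balls $B(y,r_n)$ with common center and $\sum_n\mu(B(y,r_n))=\infty$ satisfies $\mu(\limsup_n T^{-n}B(y,r_n))=1$. If $y\in X$ is such that the local dimension $d_\mu(y)$ exists, then $$\liminf_{r\to0}\frac{\log\tau_{B(y,r)}(x)}{-\log r}=d_\mu(y)\quad\text{for }\mu\text{-a.e. }x.$$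
   Context: $\tau_A(x)=\min\{n\in\mathbf N:T^n(x)\in A\}$ ($\infty$ if no such $n$). A sequence of sets $A_n$ is strongly Borel–Cantelli if for $\mu$-a.e. $x$, $\sum_{n=1}^N1_{T^{-n}A_n}(x)/\sum_{n=1}^N\mu(A_n)\to1$ as $N\to\infty$. $\limsup_n S_n$ is the set of points lying in infinitely many $S_n$. Upper and lower local dimensions: $\overline d_\mu(y)=\limsup_{r\to0}\frac{\log\mu(B(y,r))}{\log r}$, $\underline d_\mu(y)=\liminf_{r\to0}\frac{\log\mu(B(y,r))}{\log r}$; if equal, the common value is $d_\mu(y)$. *)

theory Defs
  imports "HOL-Probability.Probability"
begin

definition measure_preserving :: "'a measure \<Rightarrow> ('a \<Rightarrow> 'a) \<Rightarrow> bool" where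
  "measure_preserving M T \<longleftrightarrow> T \<in> M \<rightarrow>\<^sub>M M \<and> distr M M T = M"

definition hitting_time :: "('a \<Rightarrow> 'a) \<Rightarrow> 'a set \<Rightarrow> 'a \<Rightarrow> enat" where
  "hitting_time T A x =
     (if \<exists>n::nat. n \<ge> 1 \<and> (T ^^ n) x \<in> A
      then enat (LEAST n::nat. n \<ge> 1 \<and> (T ^^ n) x \<in> A) else \<infinity>)"

definition hit_ratio :: "('a::metric_space \<Rightarrow> 'a) \<Rightarrow> 'a \<Rightarrow> real \<Rightarrow> 'a \<Rightarrow> ereal" where
  "hit_ratio T y r x =
     (case hitting_time T (cball y r) x of
        enat k \<Rightarrow> ereal (ln (real k) / (- ln r))
      | \<infinity> \<Rightarrow> \<infinity>)"

text \<open>log mu(B(y,r)) / log r, with value +infinity when mu(B(y,r)) = 0 (log 0 = -infinity).\<close>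
definition dim_ratio :: "'a::metric_space measure \<Rightarrow> 'a \<Rightarrow> real \<Rightarrow> ereal" where
  "dim_ratio M y r =
     (if measure M (cball y r) = 0 then \<infinity>
      else ereal (ln (measure M (cball y r)) / ln r))"

definition lower_local_dim :: "'a::metric_space measure \<Rightarrow> 'a \<Rightarrow> ereal" where
  "lower_local_dim M y = Liminf (at_right 0) (dim_ratio M y)"

definition upper_local_dim :: "'a::metric_space measure \<Rightarrow> 'a \<Rightarrow> ereal" where
  "upper_local_dim M y = Limsup (at_right 0) (dim_ratio M y)"

definition strongly_BC :: "'a measure \<Rightarrow> ('a \<Rightarrow> 'a) \<Rightarrow> (nat \<Rightarrow> 'a set) \<Rightarrow> bool" where
  "strongly_BC M T A \<longleftrightarrow>
     (AE x in M. (\<lambda>N. (\<Sum>n\<in>{1..N}. indicator (A n) ((T ^^ n) x) :: real)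
                       / (\<Sum>n\<in>{1..N}. measure M (A n))) \<longlonglongrightarrow> 1)"

end

theory Submission
  imports Defs "HOL-Real_Asymp.Real_Asymp"
begin

lemma G_liminf_ge:
  fixes f :: "_ \<Rightarrow> ereal"
  assumes "\<And>\<eta>. \<eta> > 0 \<Longrightarrow> eventually (\<lambda>r. ereal (c - \<eta>) \<le> f r) F"
  shows "ereal c \<le> Liminf F f"
proof (subst le_Liminf_iff, intro allI impI)
  fix y assume "y < ereal c"
  then obtain z where z: "y < ereal z" "ereal z < ereal c" using ereal_dense2 by blast
  have "eventually (\<lambda>r. ereal (c - (c - z)) \<le> f r) F" using z by (intro assms) simp
  then show "eventually (\<lambda>r. y < f r) F" by eventually_elim (use z in auto)
qed

lemma G_limsup_le:
  fixes f :: "_ \<Rightarrow> ereal"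
  assumes "\<And>\<eta>. \<eta> > 0 \<Longrightarrow> eventually (\<lambda>r. f r \<le> ereal (c + \<eta>)) F"
  shows "Limsup F f \<le> ereal c"
proof (subst Limsup_le_iff, intro allI impI)
  fix y assume "y > ereal c"
  then obtain z where z: "ereal c < ereal z" "ereal z < y" using ereal_dense2 by blast
  have "eventually (\<lambda>r. f r \<le> ereal (c + (z - c))) F" using z by (intro assms) simp
  then show "eventually (\<lambda>r. y > f r) F" by eventually_elim (use z in auto)
qed

lemma G_limsup_ge:
  fixes f :: "_ \<Rightarrow> ereal"
  assumes "\<And>\<eta>. \<eta> > 0 \<Longrightarrow> frequently (\<lambda>r. ereal (c - \<eta>) \<le> f r) F"
  shows "ereal c \<le> Limsup F f"
proof (rule ccontr)
  assume "\<not> ereal c \<le> Limsup F f"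
  then have "Limsup F f < ereal c" by simp
  then obtain z where z: "Limsup F f < ereal z" "ereal z < ereal c" using ereal_dense2 by blast
  have ev: "eventually (\<lambda>r. f r < ereal z) F" using z(1) by (rule Limsup_lessD)
  have "frequently (\<lambda>r. ereal (c - (c - z)) \<le> f r) F" using z by (intro assms) simp
  then have "frequently (\<lambda>r. ereal z \<le> f r) F" by simp
  with ev show False unfolding frequently_def by (auto elim: eventually_mono simp: not_le)
qed

lemma G_liminf_le:
  fixes f :: "_ \<Rightarrow> ereal"
  assumes "\<And>\<eta>. \<eta> > 0 \<Longrightarrow> frequently (\<lambda>r. f r \<le> ereal (c + \<eta>)) F"
  shows "Liminf F f \<le> ereal c"
proof (rule ccontr)
  assume "\<not> Liminf F f \<le> ereal c"
  then have "ereal c < Liminf F f" by simp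
  then obtain z where z: "ereal c < ereal z" "ereal z < Liminf F f" using ereal_dense2 by blast
  have ev: "eventually (\<lambda>r. f r > ereal z) F" using z(2) by (rule less_LiminfD)
  have "frequently (\<lambda>r. f r \<le> ereal (c + (z - c))) F" using z by (intro assms) simp
  then have "frequently (\<lambda>r. f r \<le> ereal z) F" by simp
  with ev show False unfolding frequently_def by (auto elim: eventually_mono simp: not_le)
qed

lemma G_rat_ge:
  fixes A B :: ereal
  assumes "\<And>q::rat. ereal (of_rat q) < A \<Longrightarrow> ereal (of_rat q) \<le> B"
  shows "A \<le> B"
proof (rule ccontr)
  assume "\<not> A \<le> B"
  then have "B < A" by simp
  then obtain z1 where z1: "B < ereal z1" "ereal z1 < A" using ereal_dense2 by blast
  then obtain z2 where z2: "ereal z1 < ereal z2" "ereal z2 < A" using ereal_dense2 by blast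
  obtain q where q: "q \<in> \<rat>" "z1 < q" "q < z2" using Rats_dense_in_real[of z1 z2] z2 by auto
  then obtain q' where q': "q = of_rat q'" using Rats_cases by blast
  have "ereal q < ereal z2" using q by simp
  then have "ereal q < A" using z2(2) by (rule order.strict_trans)
  then have "ereal (of_rat q') < A" using q' by simp
  then have "ereal (of_rat q') \<le> B" by (rule assms)
  then have qB: "ereal q \<le> B" using q' by simp
  have "ereal z1 < ereal q" using q by simp
  then have "B < ereal q" using z1(1) by (rule order.strict_trans[rotated])
  then show False using qB by simp
qed

lemma G_rat_le:
  fixes A B :: ereal
  assumes "\<And>q::rat. A < ereal (of_rat q) \<Longrightarrow> B \<le> ereal (of_rat q)"
  shows "B \<le> A"
proof (rule ccontr)
  assume "\<not> B \<le> A"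
  then have "A < B" by simp
  then obtain z1 where z1: "A < ereal z1" "ereal z1 < B" using ereal_dense2 by blast
  then obtain z0 where z0: "A < ereal z0" "ereal z0 < ereal z1" using ereal_dense2 by blast
  obtain q where q: "q \<in> \<rat>" "z0 < q" "q < z1" using Rats_dense_in_real[of z0 z1] z0 by auto
  then obtain q' where q': "q = of_rat q'" using Rats_cases by blast
  have "ereal z0 < ereal q" using q by simp
  then have "A < ereal q" using z0(1) by (rule order.strict_trans[rotated])
  then have "A < ereal (of_rat q')" using q' by simp
  then have "B \<le> ereal (of_rat q')" by (rule assms)
  then have qB: "B \<le> ereal q" using q' by simp
  have "ereal q < ereal z1" using q by simp
  then have "ereal q < B" using z1(2) by (rule order.strict_trans)
  then show False using qB by simp
qed

lemma freq_at_right0I: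
  assumes "\<And>d. d > 0 \<Longrightarrow> \<exists>r. 0 < r \<and> r < d \<and> P r"
  shows "frequently P (at_right (0::real))"
  unfolding frequently_def eventually_at_right_field using assms by force

lemma freq_at_right0D:
  assumes "frequently P (at_right (0::real))" "d > 0"
  shows "\<exists>r. 0 < r \<and> r < d \<and> P r"
  using assms unfolding frequently_def eventually_at_right_field by force

lemma ev_at_right0D:
  assumes "eventually P (at_right (0::real))"
  shows "\<exists>d>0. \<forall>r. 0 < r \<and> r < d \<longrightarrow> P r"
  using assms unfolding eventually_at_right_field by force





locale hsys = prob_space M for M :: "'a::metric_space measure" +
  fixes T :: "'a \<Rightarrow> 'a"
  assumes sets_eq: "sets M = sets borel" and mp: "measure_preserving M T"
begin
lemma space_eq: "space M = UNIV"
  using sets_eq_imp_space_eq[OF sets_eq] by simp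
lemma T_meas: "T \<in> M \<rightarrow>\<^sub>M M" using mp unfolding measure_preserving_def by simp
lemma Tn_meas: "(T ^^ n) \<in> M \<rightarrow>\<^sub>M M"
  by (induction n) (auto intro: measurable_compose[OF _ T_meas])
lemma cball_sets[measurable]: "cball y r \<in> sets M"
  using sets_eq by (simp add: borel_closed)
lemma pre_sets: "A \<in> sets M \<Longrightarrow> (T ^^ n) -` A \<in> sets M"
  using measurable_sets[OF Tn_meas, of A n] by (simp add: space_eq)
lemma pres1: "A \<in> sets M \<Longrightarrow> measure M (T -` A) = measure M A"
proof -
  assume A: "A \<in> sets M"
  have "distr M M T = M" using mp unfolding measure_preserving_def by simp
  then have "measure M A = measure (distr M M T) A" by simp
  also have "\<dots> = measure M (T -` A \<inter> space M)"
    using A T_meas by (simp add: measure_distr)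
  finally show ?thesis by (simp add: space_eq)
qed
lemma pres: "A \<in> sets M \<Longrightarrow> measure M ((T ^^ n) -` A) = measure M A"
proof (induction n arbitrary: A)
  case 0 then show ?case by simp
next
  case (Suc n)
  have "(T ^^ Suc n) -` A = T -` ((T ^^ n) -` A)" unfolding funpow_Suc_right by auto
  then have "measure M ((T ^^ Suc n) -` A) = measure M (T -` ((T ^^ n) -` A))" by (simp only:)
  also have "\<dots> = measure M ((T ^^ n) -` A)" using pres1[OF pre_sets[OF Suc.prems]] .
  also have "\<dots> = measure M A" using Suc.IH[OF Suc.prems] .
  finally show ?case .
qed

lemma hitcount:
  assumes A: "A \<in> sets M" and K: "K \<ge> 0"
  shows "measure M {x. \<exists>n. 1 \<le> n \<and> real n \<le> K \<and> (T ^^ n) x \<in> A} \<le> K * measure M A"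
proof -
  define k where "k = nat \<lfloor>K\<rfloor>"
  have "{x. \<exists>n. 1 \<le> n \<and> real n \<le> K \<and> (T ^^ n) x \<in> A} = (\<Union>n\<in>{1..k}. (T ^^ n) -` A)"
  proof -
    have "real n \<le> K \<longleftrightarrow> n \<le> k" for n
      unfolding k_def using K by (simp add: le_nat_iff le_floor_iff)
    then show ?thesis by auto
  qed
  then have "measure M {x. \<exists>n. 1 \<le> n \<and> real n \<le> K \<and> (T ^^ n) x \<in> A} \<le> (\<Sum>n\<in>{1..k}. measure M ((T ^^ n) -` A))"
    using pre_sets[OF A] measure_UNION_le[of "{1..k}" "\<lambda>n. (T ^^ n) -` A" M] by simp
  also have "\<dots> = real k * measure M A" using pres[OF A] by simp
  also have "\<dots> \<le> K * measure M A"
    unfolding k_def using K by (intro mult_right_mono) auto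
  finally show ?thesis .
qed

lemma HR_lower:
  assumes r: "0 < r" "r < 1" and K: "K > 0"
    and nohit: "\<And>n. 1 \<le> n \<Longrightarrow> real n \<le> K \<Longrightarrow> (T ^^ n) x \<notin> cball y r"
  shows "ereal (ln K / (- ln r)) \<le> hit_ratio T y r x"
proof (cases "\<exists>n::nat. n \<ge> 1 \<and> (T ^^ n) x \<in> cball y r")
  case True
  define k where "k = (LEAST n::nat. n \<ge> 1 \<and> (T ^^ n) x \<in> cball y r)"
  have k: "k \<ge> 1 \<and> (T ^^ k) x \<in> cball y r" unfolding k_def using True by (metis (mono_tags, lifting) LeastI)
  then have "real k > K" using nohit by force
  then have "ln K \<le> ln (real k)" using K by simp
  moreover have "- ln r > 0" using r by simp
  ultimately have "ln K / (- ln r) \<le> ln (real k) / (- ln r)" by (metis divide_right_mono less_imp_le)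
  then show ?thesis using True unfolding hit_ratio_def hitting_time_def k_def[symmetric] by simp
next
  case False
  have "hitting_time T (cball y r) x = \<infinity>" unfolding hitting_time_def by (rule if_not_P[OF False])
  then show ?thesis unfolding hit_ratio_def by simp
qed

lemma HR_upper:
  assumes r: "0 < r" "r < 1" and n: "1 \<le> n" "real n \<le> N"
    and hit: "(T ^^ n) x \<in> cball y r"
  shows "hit_ratio T y r x \<le> ereal (ln N / (- ln r))"
proof -
  have True: "\<exists>n::nat. n \<ge> 1 \<and> (T ^^ n) x \<in> cball y r" using n hit by blast
  define k where "k = (LEAST n::nat. n \<ge> 1 \<and> (T ^^ n) x \<in> cball y r)"
  have k: "k \<ge> 1" unfolding k_def using True by (metis (mono_tags, lifting) LeastI)
  have "k \<le> n" unfolding k_def using n hit by (simp add: Least_le)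
  then have "real k \<le> N" using n by linarith
  then have "ln (real k) \<le> ln N" using k by simp
  moreover have "- ln r > 0" using r by simp
  ultimately have "ln (real k) / (- ln r) \<le> ln N / (- ln r)" by (metis divide_right_mono less_imp_le)
  then show ?thesis using True unfolding hit_ratio_def hitting_time_def k_def[symmetric] by simp
qed

lemma HR_nonneg:
  assumes r: "0 < r" "r < 1"
  shows "0 \<le> hit_ratio T y r x"
proof (cases "\<exists>n::nat. n \<ge> 1 \<and> (T ^^ n) x \<in> cball y r")
  case True
  define k where "k = (LEAST n::nat. n \<ge> 1 \<and> (T ^^ n) x \<in> cball y r)"
  have k: "k \<ge> 1" unfolding k_def using True by (metis (mono_tags, lifting) LeastI)
  then have "ln (real k) \<ge> 0" by simp
  moreover have "- ln r > 0" using r by simp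
  ultimately have "0 \<le> ln (real k) / (- ln r)" by (rule divide_nonneg_pos)
  then show ?thesis using True unfolding hit_ratio_def hitting_time_def k_def[symmetric] by simp
next
  case False
  have "hitting_time T (cball y r) x = \<infinity>" unfolding hitting_time_def by (rule if_not_P[OF False])
  then show ?thesis unfolding hit_ratio_def by simp
qed

lemma DR_less:
  assumes r: "0 < r" "r < 1" and d: "dim_ratio M y r < ereal c"
  shows "measure M (cball y r) > r powr c"
proof -
  have m0: "measure M (cball y r) \<noteq> 0" using d unfolding dim_ratio_def by (auto split: if_splits)
  then have m: "measure M (cball y r) > 0" using measure_nonneg[of M "cball y r"] by linarith
  have "ln (measure M (cball y r)) / ln r < c" using d m0 unfolding dim_ratio_def by simp
  moreover have "ln r < 0" using r by simp
  ultimately have "ln (measure M (cball y r)) > c * ln r" by (simp add: divide_less_eq mult.commute)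
  then have "exp (c * ln r) < measure M (cball y r)" using m by (metis exp_less_cancel_iff exp_ln)
  then show ?thesis using r by (simp add: powr_def mult.commute)
qed

lemma DR_greater:
  assumes r: "0 < r" "r < 1" and d: "dim_ratio M y r > ereal c"
  shows "measure M (cball y r) < r powr c"
proof (cases "measure M (cball y r) = 0")
  case True then show ?thesis using r by simp
next
  case False
  then have m: "measure M (cball y r) > 0" using measure_nonneg[of M "cball y r"] by linarith
  have "ln (measure M (cball y r)) / ln r > c" using d False unfolding dim_ratio_def by simp
  moreover have "ln r < 0" using r by simp
  ultimately have "ln (measure M (cball y r)) < c * ln r" by (simp add: less_divide_eq mult.commute)
  then have "measure M (cball y r) < exp (c * ln r)" using m by (metis exp_less_cancel_iff exp_ln)
  then show ?thesis using r by (simp add: powr_def mult.commute)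
qed

lemma DR_nonneg:
  assumes r: "0 < r" "r < 1"
  shows "0 \<le> dim_ratio M y r"
proof (cases "measure M (cball y r) = 0")
  case True then show ?thesis unfolding dim_ratio_def by simp
next
  case False
  then have m: "measure M (cball y r) > 0" using measure_nonneg[of M "cball y r"] by linarith
  have "measure M (cball y r) \<le> 1" by simp
  then have "ln (measure M (cball y r)) \<le> 0" using m by simp
  moreover have "ln r < 0" using r by simp
  ultimately have "0 \<le> ln (measure M (cball y r)) / ln r" by (simp add: divide_nonpos_neg)
  then show ?thesis using False unfolding dim_ratio_def by simp
qed
end



definition Nb :: "(nat \<Rightarrow> nat) \<Rightarrow> nat \<Rightarrow> nat" where "Nb L j = (\<Sum>i<j. L i)"
definition blk :: "(nat \<Rightarrow> nat) \<Rightarrow> nat \<Rightarrow> nat" where "blk L n = (LEAST j. n \<le> Nb L (Suc j))"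

lemma Nb_Suc: "Nb L (Suc j) = Nb L j + L j" unfolding Nb_def by simp

context fixes L :: "nat \<Rightarrow> nat" assumes L1: "\<And>i. L i \<ge> 1"
begin
lemma Nb_ge: "Nb L j \<ge> j"
  by (induction j) (auto simp: Nb_Suc intro: order.trans[OF _ add_mono[OF _ L1]])

lemma Nb_mono: "j \<le> j' \<Longrightarrow> Nb L j \<le> Nb L j'"
  unfolding Nb_def by (rule sum_mono2) auto

lemma Nb_strict: "strict_mono (Nb L)"
  proof (rule strict_monoI_Suc)
  fix n show "Nb L n < Nb L (Suc n)" using L1[of n] by (simp add: Nb_Suc)
qed

lemma blk_ex: "\<exists>j. n \<le> Nb L (Suc j)"
  using Nb_ge[of "Suc n"] by (intro exI[of _ n]) simp

lemma blk_le: "n \<le> Nb L (Suc (blk L n))"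
  unfolding blk_def by (rule LeastI_ex[OF blk_ex])

lemma blk_eq: assumes "Nb L j < n" "n \<le> Nb L (Suc j)" shows "blk L n = j"
proof -
  have a: "blk L n \<le> j" unfolding blk_def using assms(2) by (rule Least_le)
  have "\<not> blk L n < j"
  proof
    assume "blk L n < j"
    then have "Nb L (Suc (blk L n)) \<le> Nb L j" by (intro Nb_mono) simp
    then show False using blk_le[of n] assms(1) by linarith
  qed
  with a show ?thesis by simp
qed

lemma blk_mono: "n \<le> n' \<Longrightarrow> blk L n \<le> blk L n'"
  unfolding blk_def by (rule Least_le) (use blk_le[of n'] in \<open>simp add: blk_def\<close>)

lemma blk_ge: assumes "Nb L J < n" shows "J \<le> blk L n"
proof (rule ccontr)
  assume "\<not> J \<le> blk L n"
  then have "Nb L (Suc (blk L n)) \<le> Nb L J" by (intro Nb_mono) simp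
  then show False using blk_le[of n] assms by linarith
qed

lemma blk_sum: "(\<Sum>n\<in>{1..Nb L j}. g (blk L n)) = (\<Sum>i<j. real (L i) * g i)"
proof (induction j)
  case 0 then show ?case by (simp add: Nb_def)
next
  case (Suc j)
  have "(\<Sum>n\<in>{1..Nb L j + L j}. g (blk L n)) = (\<Sum>n\<in>{1..Nb L j}. g (blk L n)) + (\<Sum>n\<in>{Nb L j + 1..Nb L j + L j}. g (blk L n))"
    by (rule sum.ub_add_nat) simp
  also have "(\<Sum>n\<in>{Nb L j + 1..Nb L j + L j}. g (blk L n)) = (\<Sum>n\<in>{Nb L j + 1..Nb L j + L j}. g j)"
  proof (rule sum.cong)
    fix n assume "n \<in> {Nb L j + 1..Nb L j + L j}"
    then have "blk L n = j" by (intro blk_eq) (auto simp: Nb_Suc)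
    then show "g (blk L n) = g j" by simp
  qed simp
  also have "\<dots> = real (L j) * g j" by simp
  finally show ?case using Suc.IH by (simp add: Nb_Suc)
qed

lemma block_hit:
  fixes f :: "nat \<Rightarrow> real"
  assumes "(\<Sum>n\<in>{1..Nb L j}. f n) < (\<Sum>n\<in>{1..Nb L (Suc j)}. f n)"
  shows "\<exists>n. Nb L j < n \<and> n \<le> Nb L (Suc j) \<and> f n \<noteq> 0"
proof (rule ccontr)
  assume H: "\<not> ?thesis"
  have "(\<Sum>n\<in>{1..Nb L j + L j}. f n) = (\<Sum>n\<in>{1..Nb L j}. f n) + (\<Sum>n\<in>{Nb L j + 1..Nb L j + L j}. f n)"
    by (rule sum.ub_add_nat) simp
  also have "(\<Sum>n\<in>{Nb L j + 1..Nb L j + L j}. f n) = 0"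
    using H by (intro sum.neutral) (auto simp: Nb_Suc)
  finally show False using assms by (simp add: Nb_Suc)
qed
end



lemma summable_inv_sq: "summable (\<lambda>j. 1 / (real j + 1)^2)"
proof -
  have "summable (\<lambda>n. inverse (real n ^ 2))" by (rule inverse_power_summable) simp
  then have "summable (\<lambda>n. inverse (real (n + 1) ^ 2))" by (rule summable_ignore_initial_segment)
  then show ?thesis by (simp add: field_simps)
qed

lemma g_lim: "(\<lambda>j. (c * real j - 2 * ln (real j + 1)) / (real j + 1)) \<longlonglongrightarrow> c"
proof -
  have 1: "(\<lambda>j. real j/(real j+1)) \<longlonglongrightarrow> 1" by real_asymp
  have 2: "(\<lambda>j. ln(real j+1)/(real j+1)) \<longlonglongrightarrow> 0" by real_asymp
  have "(\<lambda>j. c * (real j/(real j+1)) - 2 * (ln(real j+1)/(real j+1))) \<longlonglongrightarrow> c * 1 - 2 * 0"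
    by (intro tendsto_intros 1 2)
  moreover have "(\<lambda>j. c * (real j/(real j+1)) - 2 * (ln(real j+1)/(real j+1))) = (\<lambda>j. (c * real j - 2 * ln (real j + 1)) / (real j + 1))"
    by (rule ext) (simp add: diff_divide_distrib)
  ultimately show ?thesis by simp
qed


lemma natceil: assumes "(x::real) \<ge> 1"
  shows "nat \<lceil>x\<rceil> \<ge> 1" "x \<le> real (nat \<lceil>x\<rceil>)" "real (nat \<lceil>x\<rceil>) \<le> x + 1"
proof -
  have "\<lceil>x\<rceil> \<ge> 1" using assms by linarith
  then show "nat \<lceil>x\<rceil> \<ge> 1" by linarith
  show "x \<le> real (nat \<lceil>x\<rceil>)" by (rule real_nat_ceiling_ge)
  have "real (nat \<lceil>x\<rceil>) = of_int \<lceil>x\<rceil>" using \<open>\<lceil>x\<rceil> \<ge> 1\<close> by simp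
  then show "real (nat \<lceil>x\<rceil>) \<le> x + 1" by simp
qed

lemma nonsumm_lemma:
  fixes f :: "nat \<Rightarrow> real"
  assumes f0: "\<And>n. f n \<ge> 0" and big: "\<And>j. real j \<le> (\<Sum>n\<in>{1..N j}. f n)"
  shows "\<not> summable f"
proof
  assume sf: "summable f"
  obtain j where j: "suminf f < real j" using reals_Archimedean2 by blast
  have "(\<Sum>n\<in>{1..N j}. f n) \<le> suminf f" by (rule sum_le_suminf[OF sf]) (auto simp: f0)
  then show False using big[of j] j by linarith
qed

lemma lnj_lim: "(\<lambda>j. ln(2*(real j+1))/real j) \<longlonglongrightarrow> 0" by real_asymp
lemma expj_lim: "(\<lambda>j. exp(-real j)) \<longlonglongrightarrow> 0" by real_asymp

lemma Gj_lim: assumes "kk > 0"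
  shows "(\<lambda>j. (ln (real j + 1) + ln 2 + real j * ln 2 + c*kk*(real j + real j0 + 1))/(kk*(real j + real j0))) \<longlonglongrightarrow> (ln 2 + c*kk) * inverse kk"
  using assms by real_asymp

lemma pow2_sum_bound:
  fixes b :: "nat \<Rightarrow> real"
  assumes "\<And>i. b i \<le> 2^i + 1"
  shows "(\<Sum>i<j. b i) \<le> 2 * 2^j - 1"
proof (induction j)
  case 0 then show ?case by simp
next
  case (Suc j)
  have "(\<Sum>i<Suc j. b i) = (\<Sum>i<j. b i) + b j" by simp
  also have "\<dots> \<le> 2 * 2^j - 1 + (2^j + 1)" using Suc.IH assms[of j] by linarith
  also have "\<dots> \<le> 2 * 2^Suc j - 1" by simp
  finally show ?case .
qed

context hsys begin

lemma hitset_sets: assumes "A \<in> sets M"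
  shows "{x. \<exists>n. 1 \<le> n \<and> real n \<le> K \<and> (T ^^ n) x \<in> A} \<in> sets M"
proof -
  have "{x. \<exists>n. 1 \<le> n \<and> real n \<le> K \<and> (T ^^ n) x \<in> A} = (\<Union>n\<in>{n. 1 \<le> n \<and> real n \<le> K}. (T ^^ n) -` A)"
    by auto
  also have "\<dots> \<in> sets M" using pre_sets[OF assms] by (intro sets.countable_UN') auto
  finally show ?thesis .
qed

lemma LB_liminf:
  assumes c: "c > 0" and L: "ereal c < Liminf (at_right 0) (dim_ratio M y)"
  shows "AE x in M. ereal c \<le> Liminf (at_right 0) (\<lambda>r. hit_ratio T y r x)"
proof -
  have "eventually (\<lambda>r. dim_ratio M y r > ereal c) (at_right 0)" using L by (rule less_LiminfD)
  then obtain r0 where r0: "r0 > 0" "\<And>r. 0 < r \<Longrightarrow> r < r0 \<Longrightarrow> dim_ratio M y r > ereal c"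
    using ev_at_right0D by blast
  define s where "s j = exp (- real j)" for j :: nat
  define K where "K j = exp (c * real j) / (real j + 1)^2" for j :: nat
  define A where "A j = {x. \<exists>n. 1 \<le> n \<and> real n \<le> K j \<and> (T ^^ n) x \<in> cball y (s j)}" for j
  have Kpos: "K j > 0" for j unfolding K_def by simp
  have Asets: "A j \<in> sets M" for j unfolding A_def by (rule hitset_sets) simp
  have "(\<lambda>j. exp(-real j)) \<longlonglongrightarrow> 0" by real_asymp
  then have ev1: "eventually (\<lambda>j. exp(-real j) < min r0 1) sequentially"
    using r0 by (intro order_tendstoD(2)) auto
  have "eventually (\<lambda>j. norm (measure M (A j)) \<le> 1 / (real j + 1)^2) sequentially"
    using ev1
  proof eventually_elim
    case (elim j)
    then have sj: "0 < s j" "s j < 1" "s j < r0" unfolding s_def by auto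
    have "measure M (cball y (s j)) < s j powr c" by (rule DR_greater[OF sj(1,2) r0(2)[OF sj(1,3)]])
    then have m: "measure M (cball y (s j)) \<le> exp (- c * real j)"
      unfolding s_def by (simp add: powr_def)
    have "measure M (A j) \<le> K j * measure M (cball y (s j))"
      unfolding A_def by (rule hitcount) (use Kpos in \<open>auto intro: less_imp_le\<close>)
    also have "\<dots> \<le> K j * exp (- c * real j)" using m Kpos by (intro mult_left_mono) (auto intro: less_imp_le)
    also have "\<dots> = 1 / (real j + 1)^2" unfolding K_def by (simp add: exp_minus field_simps)
    finally show ?case by simp
  qed
  then have summ: "summable (\<lambda>j. measure M (A j))"
    by (rule summable_comparison_test_ev) (rule summable_inv_sq)
  have "AE x in M. eventually (\<lambda>j. x \<in> space M - A j) sequentially"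
    by (rule borel_cantelli_AE1) (use Asets summ in \<open>auto simp: less_top[symmetric]\<close>)
  then show ?thesis
  proof (rule AE_mp, intro AE_I2 impI)
    fix x assume evx: "eventually (\<lambda>j. x \<in> space M - A j) sequentially"
    show "ereal c \<le> Liminf (at_right 0) (\<lambda>r. hit_ratio T y r x)"
    proof (rule G_liminf_ge)
      fix \<eta> :: real assume \<eta>: "\<eta> > 0"
      define g where "g j = (c * real j - 2 * ln (real j + 1)) / (real j + 1)" for j :: nat
      have "g \<longlonglongrightarrow> c" unfolding g_def by (rule g_lim)
      then have "eventually (\<lambda>j. g j > c - \<eta>) sequentially" "eventually (\<lambda>j. g j > 0) sequentially"
        using \<eta> c by (auto intro: order_tendstoD(1))
      with evx have "eventually (\<lambda>j. x \<notin> A j \<and> g j > c - \<eta> \<and> g j > 0) sequentially"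
        by eventually_elim auto
      then obtain J where J: "\<And>j. j \<ge> J \<Longrightarrow> x \<notin> A j \<and> g j > c - \<eta> \<and> g j > 0"
        unfolding eventually_sequentially by blast
      show "eventually (\<lambda>r. ereal (c - \<eta>) \<le> hit_ratio T y r x) (at_right 0)"
        unfolding eventually_at_right_field
      proof (intro exI[of _ "exp (- real J)"] conjI allI impI)
        show "0 < exp (- real J)" by simp
        fix r :: real assume r: "0 < r" "r < exp (- real J)"
        define u where "u = - ln r"
        have "ln r < ln (exp (- real J))" using r by (subst ln_less_cancel_iff) auto
        then have uJ: "u > real J" unfolding u_def by simp
        define j where "j = nat \<lfloor>u\<rfloor>"
        have ju: "real j \<le> u" "u < real j + 1" unfolding j_def using uJ by linarith+
        have jJ: "j \<ge> J" unfolding j_def using uJ by linarith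
        have "exp (- real J) \<le> 1" by simp
        then have r1: "r < 1" using r by linarith
        have "r = exp (- u)" using r by (simp add: u_def)
        also have "\<dots> \<le> exp (- real j)" using ju(1) by simp
        finally have rs: "r \<le> s j" unfolding s_def .
        have nohit: "(T ^^ n) x \<notin> cball y r" if "1 \<le> n" "real n \<le> K j" for n
        proof
          assume "(T ^^ n) x \<in> cball y r"
          then have "(T ^^ n) x \<in> cball y (s j)" using rs by auto
          then have "x \<in> A j" unfolding A_def using that by blast
          then show False using J[OF jJ] by simp
        qed
        have hr: "ereal (ln (K j) / (- ln r)) \<le> hit_ratio T y r x"
          by (rule HR_lower[OF r(1) r1 Kpos nohit])
        have lnK: "ln (K j) = g j * (real j + 1)"
          unfolding K_def g_def by (simp add: ln_div ln_realpow)
        have "g j \<le> ln (K j) / u"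
        proof -
          have "ln (K j) > 0" using lnK J[OF jJ] by simp
          moreover have "u > 0" using uJ by linarith
          ultimately have "ln (K j) / (real j + 1) \<le> ln (K j) / u"
            using ju by (intro divide_left_mono) auto
          then show ?thesis using lnK by simp
        qed
        then have "c - \<eta> \<le> ln (K j) / (- ln r)" using J[OF jJ] u_def by simp
        then have "ereal (c - \<eta>) \<le> ereal (ln (K j) / (- ln r))" by simp
        then show "ereal (c - \<eta>) \<le> hit_ratio T y r x" using hr by (rule order_trans)
      qed
    qed
  qed
qed

lemma LB_limsup:
  assumes c: "c > 0" and L: "ereal c < Limsup (at_right 0) (dim_ratio M y)"
  shows "AE x in M. ereal c \<le> Limsup (at_right 0) (\<lambda>r. hit_ratio T y r x)"
proof -
  have fr: "frequently (\<lambda>r. dim_ratio M y r > ereal c) (at_right 0)"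
  proof (rule ccontr)
    assume "\<not> ?thesis"
    then have "eventually (\<lambda>r. dim_ratio M y r \<le> ereal c) (at_right 0)"
      unfolding frequently_def by (simp add: not_less)
    then have "Limsup (at_right 0) (dim_ratio M y) \<le> ereal c" by (rule Limsup_bounded)
    then show False using L by simp
  qed
  have "\<forall>j. \<exists>s. 0 < s \<and> s < exp (- (real j + 1)) \<and> dim_ratio M y s > ereal c"
    using freq_at_right0D[OF fr] by simp
  then obtain s where s: "\<And>j. 0 < s j" "\<And>j. s j < exp (- (real j + 1))" "\<And>j. dim_ratio M y (s j) > ereal c"
    by metis
  have s1: "s j < 1" for j
  proof -
    have "exp (- (real j + 1)) \<le> 1" by simp
    then show ?thesis using s(2)[of j] by linarith
  qed
  define K where "K j = s j powr (- c) / (real j + 1)^2" for j :: nat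
  define A where "A j = {x. \<exists>n. 1 \<le> n \<and> real n \<le> K j \<and> (T ^^ n) x \<in> cball y (s j)}" for j
  have Kpos: "K j > 0" for j unfolding K_def using s(1)[of j] by simp
  have Asets: "A j \<in> sets M" for j unfolding A_def by (rule hitset_sets) simp
  have bnd: "norm (measure M (A j)) \<le> 1 / (real j + 1)^2" for j
  proof -
    have m: "measure M (cball y (s j)) \<le> s j powr c"
      using DR_greater[OF s(1) s1 s(3), of j] by simp
    have "measure M (A j) \<le> K j * measure M (cball y (s j))"
      unfolding A_def by (rule hitcount) (use Kpos in \<open>auto intro: less_imp_le\<close>)
    also have "\<dots> \<le> K j * s j powr c" using m Kpos by (intro mult_left_mono) (auto intro: less_imp_le)
    also have "\<dots> = 1 / (real j + 1)^2" unfolding K_def using s(1)[of j]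
      by (simp add: powr_minus field_simps)
    finally show ?thesis by simp
  qed
  have summ: "summable (\<lambda>j. measure M (A j))"
    by (rule summable_comparison_test[OF _ summable_inv_sq]) (use bnd in auto)
  have "AE x in M. eventually (\<lambda>j. x \<in> space M - A j) sequentially"
    by (rule borel_cantelli_AE1) (use Asets summ in \<open>auto simp: less_top[symmetric]\<close>)
  then show ?thesis
  proof (rule AE_mp, intro AE_I2 impI)
    fix x assume evx: "eventually (\<lambda>j. x \<in> space M - A j) sequentially"
    show "ereal c \<le> Limsup (at_right 0) (\<lambda>r. hit_ratio T y r x)"
    proof (rule G_limsup_ge)
      fix \<eta> :: real assume \<eta>: "\<eta> > 0"
      show "frequently (\<lambda>r. ereal (c - \<eta>) \<le> hit_ratio T y r x) (at_right 0)"
      proof (rule freq_at_right0I)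
        fix d :: real assume d: "d > 0"
        have l1: "(\<lambda>j. exp(-real j)) \<longlonglongrightarrow> 0" by real_asymp
        have l2: "(\<lambda>j. ln(real j+1)/(real j+1)) \<longlonglongrightarrow> 0" by real_asymp
        have "eventually (\<lambda>j. exp(-real j) < d) sequentially" using l1 d by (intro order_tendstoD(2)) auto
        moreover have "eventually (\<lambda>j. ln(real j+1)/(real j+1) < \<eta>/2) sequentially" using l2 \<eta> by (intro order_tendstoD(2)) auto
        ultimately have "eventually (\<lambda>j. x \<notin> A j \<and> exp(-real j) < d \<and> ln(real j+1)/(real j+1) < \<eta>/2) sequentially"
          using evx by eventually_elim auto
        then obtain j where j: "x \<notin> A j" "exp(-real j) < d" "ln(real j+1)/(real j+1) < \<eta>/2"
          unfolding eventually_sequentially by blast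
        have sd: "s j < d"
        proof -
          have "exp (- (real j + 1)) \<le> exp (- real j)" by simp
          then show ?thesis using s(2)[of j] j(2) by linarith
        qed
        have nohit: "(T ^^ n) x \<notin> cball y (s j)" if "1 \<le> n" "real n \<le> K j" for n
          using j(1) that unfolding A_def by blast
        have hr: "ereal (ln (K j) / (- ln (s j))) \<le> hit_ratio T y (s j) x"
          by (rule HR_lower[OF s(1) s1 Kpos nohit])
        define u where "u = - ln (s j)"
        have "ln (s j) < ln (exp (- (real j + 1)))" using s(1,2)[of j] by (subst ln_less_cancel_iff) auto
        then have uj: "u > real j + 1" unfolding u_def by simp
        have lnK: "ln (K j) = c * u - 2 * ln (real j + 1)"
          unfolding K_def u_def using s(1)[of j] by (simp add: ln_div ln_realpow)
        have "ln (K j) / u = c - 2 * ln (real j + 1) / u" using uj lnK by (simp add: field_simps)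
        moreover have "2 * ln (real j + 1) / u \<le> 2 * ln (real j + 1) / (real j + 1)"
          using uj by (intro divide_left_mono) auto
        moreover have "2 * ln (real j + 1) / (real j + 1) = 2 * (ln (real j + 1) / (real j + 1))" by simp
        ultimately have "c - \<eta> \<le> ln (K j) / u" using j(3) by linarith
        then have "ereal (c - \<eta>) \<le> ereal (ln (K j) / (- ln (s j)))" unfolding u_def by simp
        then have "ereal (c - \<eta>) \<le> hit_ratio T y (s j) x" using hr by (rule order_trans)
        then show "\<exists>r. 0 < r \<and> r < d \<and> ereal (c - \<eta>) \<le> hit_ratio T y r x"
          using s(1)[of j] sd by blast
      qed
    qed
  qed
qed

lemma UB_liminf:
  assumes HI: "\<And>rr. decseq rr \<Longrightarrow> (\<forall>n. rr n > 0) \<Longrightarrow> \<not> summable (\<lambda>n. measure M (cball y (rr n))) \<Longrightarrow>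
              (AE x in M. \<exists>\<^sub>\<infinity>n. (T ^^ n) x \<in> cball y (rr n))"
    and c: "c > 0" and L: "Liminf (at_right 0) (dim_ratio M y) < ereal c"
  shows "AE x in M. Liminf (at_right 0) (\<lambda>r. hit_ratio T y r x) \<le> ereal c"
proof -
  have fr: "frequently (\<lambda>r. dim_ratio M y r < ereal c) (at_right 0)"
  proof (rule ccontr)
    assume "\<not> ?thesis"
    then have "eventually (\<lambda>r. ereal c \<le> dim_ratio M y r) (at_right 0)"
      unfolding frequently_def by (simp add: not_less)
    then have "ereal c \<le> Liminf (at_right 0) (dim_ratio M y)" by (rule Liminf_bounded)
    then show False using L by simp
  qed
  have "\<forall>j. \<exists>s. 0 < s \<and> s < exp (- real j) \<and> dim_ratio M y s < ereal c"
    using freq_at_right0D[OF fr] by simp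
  then obtain s where s: "\<And>j. 0 < s j" "\<And>j. s j < exp (- real j)" "\<And>j. dim_ratio M y (s j) < ereal c"
    by metis
  have s1: "s j < 1" for j
  proof -
    have "exp (- real j) \<le> 1" by simp
    then show ?thesis using s(2)[of j] by linarith
  qed
  define m where "m r = measure M (cball y r)" for r
  have ms: "m (s j) > s j powr c" for j unfolding m_def by (rule DR_less[OF s(1) s1 s(3)])
  define t where "t j = Min (s ` {..j})" for j
  have t_in: "\<exists>i\<le>j. t j = s i" for j
  proof -
    have "t j \<in> s ` {..j}" unfolding t_def by (rule Min_in) auto
    then show ?thesis by auto
  qed
  have t_le: "t j \<le> s j" for j unfolding t_def by (rule Min_le) auto
  have t_anti: "t j' \<le> t j" if "j \<le> j'" for j j' unfolding t_def
    by (rule Min_antimono) (use that in auto)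
  have tpos: "t j > 0" and t1: "t j < 1" and mt: "m (t j) > t j powr c" for j
    using t_in[of j] s(1) s1 ms by auto
  have texp: "t j < exp (- real j)" for j using t_le[of j] s(2)[of j] by linarith
  have mt1: "m (t j) \<le> 1" for j unfolding m_def by simp
  have mtpos: "m (t j) > 0" for j proof -
    have "0 < t j powr c" using tpos[of j] by simp
    then show ?thesis using mt[of j] by linarith
  qed
  define L where "L j = nat \<lceil>1 / m (t j)\<rceil>" for j
  have inv1: "1 / m (t j) \<ge> 1" for j using mt1[of j] mtpos[of j] by simp
  have L1: "L j \<ge> 1" for j unfolding L_def by (rule natceil(1)[OF inv1])
  have Lm: "real (L j) * m (t j) \<ge> 1" for j
  proof -
    have "1 / m (t j) \<le> real (L j)" unfolding L_def by (rule natceil(2)[OF inv1])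
    then show ?thesis using mtpos[of j] by (simp add: field_simps)
  qed
  have Lup: "real (L j) \<le> 1 / m (t j) + 1" for j unfolding L_def by (rule natceil(3)[OF inv1])
  define rr where "rr n = t (blk L n)" for n
  have rr_dec: "decseq rr"
  proof (rule decseq_SucI)
    fix n show "rr (Suc n) \<le> rr n" unfolding rr_def by (rule t_anti, rule blk_mono[OF L1]) simp
  qed
  have rr_pos: "\<forall>n. rr n > 0" unfolding rr_def using tpos by simp
  have "\<not> summable (\<lambda>n. measure M (cball y (rr n)))"
  proof (rule nonsumm_lemma)
    fix j
    have "(\<Sum>n\<in>{1..Nb L j}. measure M (cball y (rr n))) = (\<Sum>i<j. real (L i) * m (t i))"
      unfolding rr_def m_def by (rule blk_sum[OF L1])
    also have "\<dots> \<ge> (\<Sum>i<j. 1)" by (rule sum_mono) (use Lm in auto)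
    finally show "real j \<le> (\<Sum>n\<in>{1..Nb L j}. measure M (cball y (rr n)))" by simp
  qed simp
  from HI[OF rr_dec rr_pos this] show ?thesis
  proof (rule AE_mp, intro AE_I2 impI)
    fix x assume io: "\<exists>\<^sub>\<infinity>n. (T ^^ n) x \<in> cball y (rr n)"
    show "Liminf (at_right 0) (\<lambda>r. hit_ratio T y r x) \<le> ereal c"
    proof (rule G_liminf_le)
      fix \<eta> :: real assume \<eta>: "\<eta> > 0"
      show "frequently (\<lambda>r. hit_ratio T y r x \<le> ereal (c + \<eta>)) (at_right 0)"
      proof (rule freq_at_right0I)
        fix d :: real assume d: "d > 0"
        have "eventually (\<lambda>j. exp(-real j) < d) sequentially" using expj_lim d by (intro order_tendstoD(2)) auto
        moreover have "eventually (\<lambda>j. ln(2*(real j+1))/real j < \<eta>) sequentially" using lnj_lim \<eta> by (intro order_tendstoD(2)) auto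
        moreover have "eventually (\<lambda>j. j \<ge> 1) sequentially" by (rule eventually_ge_at_top)
        ultimately have "eventually (\<lambda>j. exp(-real j) < d \<and> ln(2*(real j+1))/real j < \<eta> \<and> j \<ge> 1) sequentially"
          by eventually_elim auto
        then obtain J where J: "\<And>j. j \<ge> J \<Longrightarrow> exp(-real j) < d \<and> ln(2*(real j+1))/real j < \<eta> \<and> j \<ge> 1"
          unfolding eventually_sequentially by blast
        obtain n where n: "n > Nb L J" "(T ^^ n) x \<in> cball y (rr n)" using io unfolding INFM_nat by blast
        define j where "j = blk L n"
        have jJ: "j \<ge> J" unfolding j_def by (rule blk_ge[OF L1 n(1)])
        have nN: "n \<le> Nb L (Suc j)" unfolding j_def by (rule blk_le[OF L1])
        have n1: "1 \<le> n" using n(1) by linarith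
        have hit: "(T ^^ n) x \<in> cball y (t j)" using n(2) unfolding rr_def j_def .
        define B where "B = 2 / t j powr c"
        have tc: "t j powr c \<le> 1" using tpos[of j] t1[of j] c by (intro powr_le1) auto
        have tcpos: "t j powr c > 0" using tpos[of j] by simp
        have Lb: "real (L i) \<le> B" if "i \<in> {..<Suc j}" for i
        proof -
          have ij: "i \<le> j" using that by simp
          have "t j powr c \<le> t i powr c" using t_anti[OF ij] tpos[of j] c by (intro powr_mono2) auto
          then have "1 / m (t i) \<le> 1 / t j powr c"
            using mt[of i] tcpos mtpos[of i] by (intro divide_left_mono) (auto intro: less_imp_le mult_pos_pos)
          moreover have "1 \<le> 1 / t j powr c" using tc tcpos by simp
          ultimately show ?thesis using Lup[of i] unfolding B_def by simp
        qed
        have "real (Nb L (Suc j)) = (\<Sum>i<Suc j. real (L i))" unfolding Nb_def by simp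
        also have "\<dots> \<le> real (card {..<Suc j}) * B" by (rule sum_bounded_above) (use Lb in auto)
        finally have NB: "real (Nb L (Suc j)) \<le> real (Suc j) * B" by simp
        have hr: "hit_ratio T y (t j) x \<le> ereal (ln (real (Suc j) * B) / (- ln (t j)))"
          by (rule HR_upper[OF tpos t1 n1 _ hit]) (use nN NB in \<open>auto intro: order_trans\<close>)
        define u where "u = - ln (t j)"
        have "ln (t j) < ln (exp (- real j))" using tpos[of j] texp[of j] by (subst ln_less_cancel_iff) auto
        then have uj: "u > real j" unfolding u_def by simp
        have j1: "real j \<ge> 1" using J[OF jJ] by simp
        have lnB: "ln (real (Suc j) * B) = ln (2 * (real j + 1)) + c * u"
          unfolding B_def u_def using tpos[of j] by (simp add: ln_mult ln_div algebra_simps)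
        have "ln (2 * (real j + 1)) / u \<le> ln (2 * (real j + 1)) / real j"
          using uj j1 by (intro divide_left_mono) auto
        moreover have "ln (real (Suc j) * B) / u = ln (2 * (real j + 1)) / u + c"
          using lnB uj j1 by (simp add: field_simps)
        ultimately have "ln (real (Suc j) * B) / u \<le> c + \<eta>" using J[OF jJ] by linarith
        then have "hit_ratio T y (t j) x \<le> ereal (c + \<eta>)" using hr unfolding u_def by (meson ereal_less_eq(3) order_trans)
        moreover have "t j < d"
        proof -
          have "exp (- real j) < d" using J[OF jJ] by simp
          then show ?thesis using texp[of j] by linarith
        qed
        ultimately show "\<exists>r. 0 < r \<and> r < d \<and> hit_ratio T y r x \<le> ereal (c + \<eta>)"
          using tpos[of j] by blast
      qed
    qed
  qed
qed

lemma UB_limsup: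
  assumes SBC: "\<And>rr. decseq rr \<Longrightarrow> (\<forall>n. rr n > 0) \<Longrightarrow> \<not> summable (\<lambda>n. measure M (cball y (rr n))) \<Longrightarrow>
              strongly_BC M T (\<lambda>n. cball y (rr n))"
    and c: "c > 0" and kk: "kk \<ge> 1" and L: "Limsup (at_right 0) (dim_ratio M y) < ereal c"
  shows "AE x in M. Limsup (at_right 0) (\<lambda>r. hit_ratio T y r x) \<le> ereal (c + ln 2 / kk)"
proof -
  have "eventually (\<lambda>r. dim_ratio M y r < ereal c) (at_right 0)" using L by (rule Limsup_lessD)
  then obtain r0 where r0: "r0 > 0" "\<And>r. 0 < r \<Longrightarrow> r < r0 \<Longrightarrow> dim_ratio M y r < ereal c"
    using ev_at_right0D by blast
  have "eventually (\<lambda>j. exp(-real j) < r0) sequentially" using expj_lim r0 by (intro order_tendstoD(2)) auto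
  moreover have "eventually (\<lambda>j. j \<ge> 1) sequentially" by (rule eventually_ge_at_top)
  ultimately have "eventually (\<lambda>j. exp(-real j) < r0 \<and> j \<ge> 1) sequentially" by eventually_elim auto
  then obtain j0 where j0: "exp (- real j0) < r0" "j0 \<ge> 1" unfolding eventually_sequentially by blast
  define m where "m r = measure M (cball y r)" for r
  define \<rho> where "\<rho> j = exp (- (kk * (real j + real j0 + 1)))" for j :: nat
  have \<rho>pos: "\<rho> j > 0" for j unfolding \<rho>_def by simp
  have \<rho>small: "\<rho> j < r0" "\<rho> j < 1" for j
  proof -
    define v where "v = real j + real j0 + 1"
    have "1 * v \<le> kk * v" using kk unfolding v_def by (intro mult_right_mono) auto
    then have "kk * v \<ge> v" by simp
    moreover have "real j \<ge> 0" by simp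
    ultimately have "- (kk * v) < - real j0" unfolding v_def by linarith
    then have "- (kk * (real j + real j0 + 1)) < - real j0" unfolding v_def .
    then have "\<rho> j < exp (- real j0)" unfolding \<rho>_def by simp
    moreover have "exp (- real j0) \<le> 1" by simp
    ultimately show "\<rho> j < r0" "\<rho> j < 1" using j0 by linarith+
  qed
  have \<rho>anti: "\<rho> j' \<le> \<rho> j" if "j \<le> j'" for j j'
    unfolding \<rho>_def using that kk by (simp add: mult_left_mono)
  have \<rho>c: "\<rho> j powr c = exp (- (c * kk * (real j + real j0 + 1)))" for j
    unfolding \<rho>_def powr_def by simp
  have m\<rho>: "m (\<rho> j) > \<rho> j powr c" for j unfolding m_def by (rule DR_less[OF \<rho>pos \<rho>small(2) r0(2)[OF \<rho>pos \<rho>small(1)]])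
  have mpos: "m (\<rho> j) > 0" for j
  proof -
    have "0 < \<rho> j powr c" using \<rho>pos[of j] by simp
    then show ?thesis using m\<rho>[of j] by linarith
  qed
  have m1: "m (\<rho> j) \<le> 1" for j unfolding m_def by simp
  define L where "L j = nat \<lceil>2^j / m (\<rho> j)\<rceil>" for j
  have q1: "2^j / m (\<rho> j) \<ge> 1" for j
  proof -
    have "(1::real) \<le> 2^j" by simp
    then have "m (\<rho> j) \<le> 2^j" using m1[of j] by linarith
    then show ?thesis using mpos[of j] by simp
  qed
  have L1: "L j \<ge> 1" for j unfolding L_def by (rule natceil(1)[OF q1])
  have blo: "2^j \<le> real (L j) * m (\<rho> j)" for j
  proof -
    have "2^j / m (\<rho> j) \<le> real (L j)" unfolding L_def by (rule natceil(2)[OF q1])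
    then show ?thesis using mpos[of j] by (simp add: field_simps)
  qed
  have Lup: "real (L j) \<le> 2^j / m (\<rho> j) + 1" for j unfolding L_def by (rule natceil(3)[OF q1])
  have bup: "real (L j) * m (\<rho> j) \<le> 2^j + 1" for j
  proof -
    have "real (L j) * m (\<rho> j) \<le> (2^j / m (\<rho> j) + 1) * m (\<rho> j)"
      using Lup[of j] mpos[of j] by (intro mult_right_mono) auto
    also have "\<dots> = 2^j + m (\<rho> j)" using mpos[of j] by (simp add: field_simps)
    finally show ?thesis using m1[of j] by linarith
  qed
  define rr where "rr n = \<rho> (blk L n)" for n
  have rr_dec: "decseq rr"
  proof (rule decseq_SucI)
    fix n show "rr (Suc n) \<le> rr n" unfolding rr_def by (rule \<rho>anti, rule blk_mono[OF L1]) simp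
  qed
  have rr_pos: "\<forall>n. rr n > 0" unfolding rr_def using \<rho>pos by simp
  define E where "E N = (\<Sum>n\<in>{1..N}. measure M (cball y (rr n)))" for N
  have EN: "E (Nb L j) = (\<Sum>i<j. real (L i) * m (\<rho> i))" for j
    unfolding E_def rr_def m_def by (rule blk_sum[OF L1])
  have Ege: "E (Nb L j) \<ge> real j" for j
  proof -
    have "(\<Sum>i<j. (1::real)) \<le> (\<Sum>i<j. real (L i) * m (\<rho> i))"
    proof (rule sum_mono)
      fix i have "(1::real) \<le> 2^i" by simp
      then show "1 \<le> real (L i) * m (\<rho> i)" using blo[of i] by linarith
    qed
    then show ?thesis using EN[of j] by simp
  qed
  have Egrow: "E (Nb L (Suc j)) \<ge> 3/2 * E (Nb L j)" for j
  proof -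
    have "E (Nb L j) \<le> 2 * 2^j - 1" unfolding EN by (rule pow2_sum_bound[OF bup])
    then have "real (L j) * m (\<rho> j) \<ge> E (Nb L j) / 2" using blo[of j] by linarith
    then show ?thesis using EN[of "Suc j"] EN[of j] by simp
  qed
  have nsum: "\<not> summable (\<lambda>n. measure M (cball y (rr n)))"
    by (rule nonsumm_lemma[where N="Nb L"]) (use Ege in \<open>auto simp: E_def\<close>)
  have "strongly_BC M T (\<lambda>n. cball y (rr n))" by (rule SBC[OF rr_dec rr_pos nsum])
  then have "AE x in M. (\<lambda>N. (\<Sum>n\<in>{1..N}. indicator (cball y (rr n)) ((T ^^ n) x) :: real) / E N) \<longlonglongrightarrow> 1"
    unfolding strongly_BC_def E_def .
  then show ?thesis
  proof (rule AE_mp, intro AE_I2 impI)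
    fix x
    define S where "S N = (\<Sum>n\<in>{1..N}. indicator (cball y (rr n)) ((T ^^ n) x) :: real)" for N
    assume lim: "(\<lambda>N. (\<Sum>n\<in>{1..N}. indicator (cball y (rr n)) ((T ^^ n) x) :: real) / E N) \<longlonglongrightarrow> 1"
    define a where "a j = S (Nb L j) / E (Nb L j)" for j
    have "((\<lambda>N. S N / E N) \<circ> Nb L) \<longlonglongrightarrow> 1"
      by (rule LIMSEQ_subseq_LIMSEQ[OF _ Nb_strict[OF L1]]) (use lim in \<open>simp add: S_def\<close>)
    then have alim: "a \<longlonglongrightarrow> 1" unfolding a_def comp_def .
    then have alim': "(\<lambda>j. a (Suc j)) \<longlonglongrightarrow> 1" by (rule LIMSEQ_Suc)
    have "eventually (\<lambda>j. a (Suc j) > 9/10) sequentially" using alim' by (intro order_tendstoD(1)) auto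
    moreover have "eventually (\<lambda>j. a j < 11/10) sequentially" using alim by (intro order_tendstoD(2)) auto
    moreover have "eventually (\<lambda>j. j \<ge> 1) sequentially" by (rule eventually_ge_at_top)
    ultimately have evhit: "eventually (\<lambda>j. \<exists>n. 1 \<le> n \<and> n \<le> Nb L (Suc j) \<and> (T ^^ n) x \<in> cball y (\<rho> j)) sequentially"
    proof eventually_elim
      case (elim j)
      have Ej: "E (Nb L j) \<ge> 1" using Ege[of j] elim(3) by linarith
      have Ej1: "E (Nb L (Suc j)) > 0" using Egrow[of j] Ej by linarith
      have "S (Nb L j) = a j * E (Nb L j)" unfolding a_def using Ej by simp
      also have "\<dots> < 11/10 * E (Nb L j)" using elim(2) Ej by (intro mult_strict_right_mono) auto
      also have "\<dots> < 9/10 * (3/2 * E (Nb L j))" using Ej by simp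
      also have "\<dots> \<le> 9/10 * E (Nb L (Suc j))" using Egrow[of j] by simp
      also have "\<dots> < a (Suc j) * E (Nb L (Suc j))" using elim(1) Ej1 by (intro mult_strict_right_mono) auto
      also have "\<dots> = S (Nb L (Suc j))" unfolding a_def using Ej1 by simp
      finally have "S (Nb L j) < S (Nb L (Suc j))" .
      then obtain n where n: "Nb L j < n" "n \<le> Nb L (Suc j)" "indicator (cball y (rr n)) ((T ^^ n) x) \<noteq> (0::real)"
        using block_hit[where L=L and j=j and f="\<lambda>n. indicator (cball y (rr n)) ((T ^^ n) x)", OF L1] unfolding S_def by blast
      have "rr n = \<rho> j" unfolding rr_def using blk_eq[OF L1 n(1,2)] by simp
      then have "(T ^^ n) x \<in> cball y (\<rho> j)" using n(3) by (metis indicator_simps(2))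
      then show ?case using n(1,2) by (intro exI[of _ n]) auto
    qed
    define B where "B j = real (Suc j) * (2 * 2^j * exp (c * kk * (real j + real j0 + 1)))" for j
    define G where "G j = (ln (real j + 1) + ln 2 + real j * ln 2 + c*kk*(real j + real j0 + 1))/(kk*(real j + real j0))" for j
    have NB: "real (Nb L (Suc j)) \<le> B j" for j
    proof -
      define X where "X = 2^j * exp (c * kk * (real j + real j0 + 1))"
      have X1: "X \<ge> 1" unfolding X_def
        using c kk by (intro mult_ge1_I one_le_power one_le_exp_iff[THEN iffD2]) auto
      have Lb: "real (L i) \<le> 2 * X" if "i \<in> {..<Suc j}" for i
      proof -
        have ij: "i \<le> j" using that by simp
        have "2^i / m (\<rho> i) \<le> 2^i / \<rho> i powr c"
          using m\<rho>[of i] \<rho>pos[of i] mpos[of i] by (intro divide_left_mono) (auto intro: less_imp_le)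
        also have "\<dots> = 2^i * exp (c * kk * (real i + real j0 + 1))"
          unfolding \<rho>c by (simp add: exp_minus divide_inverse)
        finally have a: "2^i / m (\<rho> i) \<le> 2^i * exp (c * kk * (real i + real j0 + 1))" .
        have "(2::real)^i \<le> 2^j" using ij by (intro power_increasing) auto
        moreover have "exp (c * kk * (real i + real j0 + 1)) \<le> exp (c * kk * (real j + real j0 + 1))"
          using ij c kk by (simp add: mult_left_mono)
        ultimately have "2^i * exp (c * kk * (real i + real j0 + 1)) \<le> X"
          unfolding X_def by (intro mult_mono) auto
        then show ?thesis using a Lup[of i] X1 by linarith
      qed
      have "real (Nb L (Suc j)) = (\<Sum>i<Suc j. real (L i))" unfolding Nb_def by simp
      also have "\<dots> \<le> real (card {..<Suc j}) * (2 * X)" by (rule sum_bounded_above) (use Lb in auto)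
      finally show ?thesis unfolding B_def X_def by (simp add: mult.assoc)
    qed
    have lnB: "ln (B j) = ln (real j + 1) + ln 2 + real j * ln 2 + c*kk*(real j + real j0 + 1)" for j
      unfolding B_def by (simp add: ln_mult ln_realpow add.commute)
    have B1: "B j \<ge> 1" for j
    proof -
      have "real (Nb L (Suc j)) \<ge> 1" using Nb_ge[where L=L and j="Suc j", OF L1] by simp
      then show ?thesis using NB[of j] by linarith
    qed
    have Glim: "G \<longlonglongrightarrow> (ln 2 + c*kk) * inverse kk" unfolding G_def by (rule Gj_lim) (use kk in simp)
    have cK: "(ln 2 + c*kk) * inverse kk = c + ln 2 / kk" using kk by (simp add: field_simps)
    show "Limsup (at_right 0) (\<lambda>r. hit_ratio T y r x) \<le> ereal (c + ln 2 / kk)"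
    proof (rule G_limsup_le)
      fix \<eta> :: real assume \<eta>: "\<eta> > 0"
      have "eventually (\<lambda>j. G j < c + ln 2 / kk + \<eta>) sequentially"
        using Glim \<eta> cK by (intro order_tendstoD(2)) auto
      with evhit have "eventually (\<lambda>j. (\<exists>n. 1 \<le> n \<and> n \<le> Nb L (Suc j) \<and> (T ^^ n) x \<in> cball y (\<rho> j)) \<and> G j < c + ln 2 / kk + \<eta>) sequentially"
        by eventually_elim auto
      then obtain J where J: "\<And>j. j \<ge> J \<Longrightarrow> (\<exists>n. 1 \<le> n \<and> n \<le> Nb L (Suc j) \<and> (T ^^ n) x \<in> cball y (\<rho> j)) \<and> G j < c + ln 2 / kk + \<eta>"
        unfolding eventually_sequentially by blast
      show "eventually (\<lambda>r. hit_ratio T y r x \<le> ereal (c + ln 2 / kk + \<eta>)) (at_right 0)"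
        unfolding eventually_at_right_field
      proof (intro exI[of _ "exp (- (kk * (real J + real j0)))"] conjI allI impI)
        show "0 < exp (- (kk * (real J + real j0)))" by simp
        fix r :: real assume r: "0 < r" "r < exp (- (kk * (real J + real j0)))"
        have "exp (- (kk * (real J + real j0))) \<le> 1" using kk by simp
        then have r1: "r < 1" using r by linarith
        define u where "u = - ln r / kk"
        have "ln r < ln (exp (- (kk * (real J + real j0))))" using r by (subst ln_less_cancel_iff) auto
        then have "- ln r > kk * (real J + real j0)" by simp
        then have uJ: "u > real J + real j0" unfolding u_def using kk by (simp add: field_simps)
        define k where "k = nat \<lceil>u\<rceil> - 1"
        have ku: "real k < u" "u \<le> real k + 1" unfolding k_def using uJ by linarith+
        have kJ: "k \<ge> J + j0" unfolding k_def using uJ by linarith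
        define j where "j = k - j0"
        have jJ: "j \<ge> J" unfolding j_def using kJ by simp
        have jk: "real j + real j0 = real k" unfolding j_def using kJ by simp
        obtain n where n: "1 \<le> n" "n \<le> Nb L (Suc j)" "(T ^^ n) x \<in> cball y (\<rho> j)" using J[OF jJ] by blast
        have rr: "r = exp (- (kk * u))" unfolding u_def using r kk by simp
        have "\<rho> j \<le> r" unfolding rr \<rho>_def using ku jk kk by (simp add: mult_left_mono)
        then have hit: "(T ^^ n) x \<in> cball y r" using n(3) by auto
        have hr: "hit_ratio T y r x \<le> ereal (ln (B j) / (- ln r))"
          by (rule HR_upper[OF r(1) r1 n(1) _ hit]) (use n(2) NB[of j] in \<open>auto intro: order_trans\<close>)
        have den: "- ln r > kk * (real j + real j0)" using ku jk kk unfolding u_def by (simp add: field_simps)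
        have den0: "kk * (real j + real j0) > 0" using kk j0 by simp
        have lB: "ln (B j) \<ge> 0" using B1[of j] by simp
        have p1: "0 < - ln r" using den den0 by linarith
        have "ln (B j) / (- ln r) \<le> ln (B j) / (kk * (real j + real j0))"
          by (rule divide_left_mono[OF _ lB mult_pos_pos[OF p1 den0]]) (use den in linarith)
        also have "\<dots> = G j" unfolding G_def lnB ..
        finally have "ln (B j) / (- ln r) \<le> c + ln 2 / kk + \<eta>" using J[OF jJ] by linarith
        then show "hit_ratio T y r x \<le> ereal (c + ln 2 / kk + \<eta>)" using hr by (meson ereal_less_eq(3) order_trans)
      qed
    qed
  qed
qed
end


context hsys begin
lemma SBC_io:
  assumes sbc: "strongly_BC M T (\<lambda>n. cball y (rr n))" and ns: "\<not> summable (\<lambda>n. measure M (cball y (rr n)))"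
  shows "AE x in M. \<exists>\<^sub>\<infinity>n. (T ^^ n) x \<in> cball y (rr n)"
  using sbc unfolding strongly_BC_def
proof (rule AE_mp, intro AE_I2 impI)
  fix x
  define f where "f n = measure M (cball y (rr n))" for n
  define E where "E N = (\<Sum>n\<in>{1..N}. f n)" for N
  define S where "S N = (\<Sum>n\<in>{1..N}. indicator (cball y (rr n)) ((T ^^ n) x) :: real)" for N
  assume "(\<lambda>N. (\<Sum>n\<in>{1..N}. indicator (cball y (rr n)) ((T ^^ n) x) :: real) / (\<Sum>n\<in>{1..N}. measure M (cball y (rr n)))) \<longlonglongrightarrow> 1"
  then have lim: "(\<lambda>N. S N / E N) \<longlonglongrightarrow> 1" unfolding S_def E_def f_def .
  show "\<exists>\<^sub>\<infinity>n. (T ^^ n) x \<in> cball y (rr n)"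
  proof (rule ccontr)
    assume "\<not> ?thesis"
    then obtain n0 where n0: "\<And>n. n > n0 \<Longrightarrow> (T ^^ n) x \<notin> cball y (rr n)"
      unfolding not_INFM MOST_nat by blast
    have f0: "f n \<ge> 0" for n unfolding f_def by simp
    have Sb: "S N \<le> real n0 + 1" for N
    proof -
      have "S N = (\<Sum>n\<in>{1..N} \<inter> {..n0}. indicator (cball y (rr n)) ((T ^^ n) x) :: real)"
        unfolding S_def by (rule sum.mono_neutral_right) (use n0 in auto)
      also have "\<dots> \<le> (\<Sum>n\<in>{1..N} \<inter> {..n0}. (1::real))" by (rule sum_mono) (simp add: indicator_def)
      also have "\<dots> = real (card ({1..N} \<inter> {..n0}))" by simp
      also have "\<dots> \<le> real (card {..n0})" by (intro of_nat_mono card_mono) auto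
      finally show ?thesis by simp
    qed
    have S0: "S N \<ge> 0" for N unfolding S_def by (rule sum_nonneg) simp
    have E0: "E N \<ge> 0" for N unfolding E_def using f0 by (simp add: sum_nonneg)
    have Emono: "E N \<le> E N'" if "N \<le> N'" for N N'
      unfolding E_def using that f0 by (intro sum_mono2) auto
    have "eventually (\<lambda>N. S N / E N > 1/2) sequentially" using lim by (intro order_tendstoD(1)) auto
    then obtain N1 where N1: "\<And>N. N \<ge> N1 \<Longrightarrow> S N / E N > 1/2" unfolding eventually_sequentially by blast
    have Eb: "E N \<le> 2 * (real n0 + 1)" for N
    proof -
      let ?N = "max N N1"
      have r: "S ?N / E ?N > 1/2" using N1 by simp
      have "E ?N \<noteq> 0" using r by auto
      then have Ep: "E ?N > 0" using E0[of ?N] by linarith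
      then have "E ?N < 2 * S ?N" using r by (simp add: field_simps)
      moreover have "2 * S ?N \<le> 2 * (real n0 + 1)" using Sb[of ?N] by simp
      ultimately have "E ?N \<le> 2 * (real n0 + 1)" by (meson less_imp_le order.strict_trans2)
      moreover have "E N \<le> E ?N" by (rule Emono) simp
      ultimately show ?thesis by linarith
    qed
    have "summable f"
    proof (rule bounded_imp_summable)
      show "f n \<ge> 0" for n by (rule f0)
      fix n :: nat
      have "{..n} = insert 0 {1..n}" by auto
      then have "(\<Sum>k\<le>n. f k) = f 0 + E n" unfolding E_def by simp
      then show "(\<Sum>k\<le>n. f k) \<le> f 0 + 2 * (real n0 + 1)" using Eb[of n] by linarith
    qed
    then show False using ns unfolding f_def by simp
  qed
qed
end

theorem corollary2p5:
  fixes M :: "'a::metric_space measure" and T :: "'a \<Rightarrow> 'a"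
  assumes "prob_space M"
    and "sets M = sets borel"
    and "\<forall>x. measure M {x} = 0"
    and "measure_preserving M T"
  shows
    "((\<forall>y (r::nat \<Rightarrow> real). decseq r \<longrightarrow> (\<forall>n. r n > 0) \<longrightarrow>
          \<not> summable (\<lambda>n. measure M (cball y (r n))) \<longrightarrow>
          strongly_BC M T (\<lambda>n. cball y (r n)))
      \<longrightarrow> (\<forall>y. AE x in M.
             Liminf (at_right 0) (\<lambda>r. hit_ratio T y r x) = lower_local_dim M y \<and>
             Limsup (at_right 0) (\<lambda>r. hit_ratio T y r x) = upper_local_dim M y))
   \<and>
    ((\<forall>y (r::nat \<Rightarrow> real). decseq r \<longrightarrow> (\<forall>n. r n > 0) \<longrightarrow>
          \<not> summable (\<lambda>n. measure M (cball y (r n))) \<longrightarrow>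
          measure M {x. \<exists>\<^sub>\<infinity>n. (T ^^ n) x \<in> cball y (r n)} = 1)
      \<longrightarrow> (\<forall>y. lower_local_dim M y = upper_local_dim M y \<longrightarrow>
             (AE x in M. Liminf (at_right 0) (\<lambda>r. hit_ratio T y r x) = lower_local_dim M y)))"
proof -
  have "hsys M T" unfolding hsys_def hsys_axioms_def using assms by auto
  then interpret hsys M T .
  have ev01: "eventually (\<lambda>r. 0 < r \<and> r < (1::real)) (at_right 0)"
    unfolding eventually_at_right_field by (intro exI[of _ 1]) auto
  have hnn: "eventually (\<lambda>r. 0 \<le> hit_ratio T y r x) (at_right 0)" for y x
    using ev01 by eventually_elim (auto intro: HR_nonneg)
  have hLi0: "0 \<le> Liminf (at_right 0) (\<lambda>r. hit_ratio T y r x)" for y x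
    using hnn by (rule Liminf_bounded)
  have hLs0: "0 \<le> Limsup (at_right 0) (\<lambda>r. hit_ratio T y r x)" for y x
    using hnn by (intro le_Limsup) auto
  have dnn: "eventually (\<lambda>r. 0 \<le> dim_ratio M y r) (at_right 0)" for y
    using ev01 by eventually_elim (auto intro: DR_nonneg)
  have dLi0: "0 \<le> Liminf (at_right 0) (dim_ratio M y)" for y
    using dnn by (rule Liminf_bounded)
  have dLs0: "0 \<le> Limsup (at_right 0) (dim_ratio M y)" for y
    using dnn by (intro le_Limsup) auto
  have A1: "AE x in M. \<forall>q::rat. 0 < real_of_rat q \<longrightarrow> ereal (of_rat q) < Liminf (at_right 0) (dim_ratio M y) \<longrightarrow>
              ereal (of_rat q) \<le> Liminf (at_right 0) (\<lambda>r. hit_ratio T y r x)" for y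
    unfolding AE_all_countable
  proof
    fix q :: rat
    show "AE x in M. 0 < real_of_rat q \<longrightarrow> ereal (of_rat q) < Liminf (at_right 0) (dim_ratio M y) \<longrightarrow>
              ereal (of_rat q) \<le> Liminf (at_right 0) (\<lambda>r. hit_ratio T y r x)"
    proof (cases "0 < real_of_rat q \<and> ereal (of_rat q) < Liminf (at_right 0) (dim_ratio M y)")
      case True
      then have "AE x in M. ereal (of_rat q) \<le> Liminf (at_right 0) (\<lambda>r. hit_ratio T y r x)"
        by (intro LB_liminf) auto
      then show ?thesis by eventually_elim auto
    qed auto
  qed
  have liminf_eq: "AE x in M. Liminf (at_right 0) (\<lambda>r. hit_ratio T y r x) = lower_local_dim M y"
    if HI: "\<And>rr. decseq rr \<Longrightarrow> (\<forall>n. rr n > 0) \<Longrightarrow> \<not> summable (\<lambda>n. measure M (cball y (rr n))) \<Longrightarrow>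
              (AE x in M. \<exists>\<^sub>\<infinity>n. (T ^^ n) x \<in> cball y (rr n))" for y
  proof -
    have A2: "AE x in M. \<forall>q::rat. 0 < real_of_rat q \<longrightarrow> Liminf (at_right 0) (dim_ratio M y) < ereal (of_rat q) \<longrightarrow>
              Liminf (at_right 0) (\<lambda>r. hit_ratio T y r x) \<le> ereal (of_rat q)"
      unfolding AE_all_countable
    proof
      fix q :: rat
      show "AE x in M. 0 < real_of_rat q \<longrightarrow> Liminf (at_right 0) (dim_ratio M y) < ereal (of_rat q) \<longrightarrow>
              Liminf (at_right 0) (\<lambda>r. hit_ratio T y r x) \<le> ereal (of_rat q)"
      proof (cases "0 < real_of_rat q \<and> Liminf (at_right 0) (dim_ratio M y) < ereal (of_rat q)")
        case True
        then have "AE x in M. Liminf (at_right 0) (\<lambda>r. hit_ratio T y r x) \<le> ereal (of_rat q)"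
          by (intro UB_liminf[OF HI]) auto
        then show ?thesis by eventually_elim auto
      qed auto
    qed
    show ?thesis using A1[of y] A2
    proof eventually_elim
      case (elim x)
      have "Liminf (at_right 0) (dim_ratio M y) \<le> Liminf (at_right 0) (\<lambda>r. hit_ratio T y r x)"
      proof (rule G_rat_ge)
        fix q :: rat assume q: "ereal (of_rat q) < Liminf (at_right 0) (dim_ratio M y)"
        show "ereal (of_rat q) \<le> Liminf (at_right 0) (\<lambda>r. hit_ratio T y r x)"
        proof (cases "0 < real_of_rat q")
          case True then show ?thesis using elim(1) q by blast
        next
          case False then have "ereal (of_rat q) \<le> 0" by simp
          then show ?thesis using hLi0[of y x] by (rule order_trans)
        qed
      qed
      moreover have "Liminf (at_right 0) (\<lambda>r. hit_ratio T y r x) \<le> Liminf (at_right 0) (dim_ratio M y)"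
      proof (rule G_rat_le)
        fix q :: rat assume q: "Liminf (at_right 0) (dim_ratio M y) < ereal (of_rat q)"
        have "0 < real_of_rat q" using dLi0[of y] q by (metis ereal_less(2) le_less_trans zero_ereal_def)
        then show "Liminf (at_right 0) (\<lambda>r. hit_ratio T y r x) \<le> ereal (of_rat q)" using elim(2) q by blast
      qed
      ultimately show ?case unfolding lower_local_dim_def by (rule antisym[rotated])
    qed
  qed
  show ?thesis
  proof (intro conjI impI allI)
    fix y
    assume SBC: "\<forall>y (r::nat \<Rightarrow> real). decseq r \<longrightarrow> (\<forall>n. r n > 0) \<longrightarrow>
          \<not> summable (\<lambda>n. measure M (cball y (r n))) \<longrightarrow>
          strongly_BC M T (\<lambda>n. cball y (r n))"
    have SBCy: "strongly_BC M T (\<lambda>n. cball y (rr n))"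
      if "decseq rr" "\<forall>n. rr n > 0" "\<not> summable (\<lambda>n. measure M (cball y (rr n)))" for rr
      using SBC that by blast
    have LIe: "AE x in M. Liminf (at_right 0) (\<lambda>r. hit_ratio T y r x) = lower_local_dim M y"
      by (rule liminf_eq) (rule SBC_io[OF SBCy], assumption+)
    have A3: "AE x in M. \<forall>q::rat. 0 < real_of_rat q \<longrightarrow> ereal (of_rat q) < Limsup (at_right 0) (dim_ratio M y) \<longrightarrow>
              ereal (of_rat q) \<le> Limsup (at_right 0) (\<lambda>r. hit_ratio T y r x)"
      unfolding AE_all_countable
    proof
      fix q :: rat
      show "AE x in M. 0 < real_of_rat q \<longrightarrow> ereal (of_rat q) < Limsup (at_right 0) (dim_ratio M y) \<longrightarrow>
              ereal (of_rat q) \<le> Limsup (at_right 0) (\<lambda>r. hit_ratio T y r x)"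
      proof (cases "0 < real_of_rat q \<and> ereal (of_rat q) < Limsup (at_right 0) (dim_ratio M y)")
        case True
        then have "AE x in M. ereal (of_rat q) \<le> Limsup (at_right 0) (\<lambda>r. hit_ratio T y r x)"
          by (intro LB_limsup) auto
        then show ?thesis by eventually_elim auto
      qed auto
    qed
    have A4: "AE x in M. \<forall>q::rat. \<forall>K::nat. 0 < real_of_rat q \<longrightarrow> Limsup (at_right 0) (dim_ratio M y) < ereal (of_rat q) \<longrightarrow>
              Limsup (at_right 0) (\<lambda>r. hit_ratio T y r x) \<le> ereal (of_rat q + ln 2 / real (Suc K))"
      unfolding AE_all_countable
    proof (intro allI)
      fix q :: rat and K :: nat
      show "AE x in M. 0 < real_of_rat q \<longrightarrow> Limsup (at_right 0) (dim_ratio M y) < ereal (of_rat q) \<longrightarrow>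
              Limsup (at_right 0) (\<lambda>r. hit_ratio T y r x) \<le> ereal (of_rat q + ln 2 / real (Suc K))"
      proof (cases "0 < real_of_rat q \<and> Limsup (at_right 0) (dim_ratio M y) < ereal (of_rat q)")
        case True
        have "AE x in M. Limsup (at_right 0) (\<lambda>r. hit_ratio T y r x) \<le> ereal (of_rat q + ln 2 / real (Suc K))"
          by (rule UB_limsup[OF SBCy]) (use True in auto)
        then show ?thesis by eventually_elim auto
      qed auto
    qed
    have LSe: "AE x in M. Limsup (at_right 0) (\<lambda>r. hit_ratio T y r x) = upper_local_dim M y"
      using A3 A4
    proof eventually_elim
      case (elim x)
      have "Limsup (at_right 0) (dim_ratio M y) \<le> Limsup (at_right 0) (\<lambda>r. hit_ratio T y r x)"
      proof (rule G_rat_ge)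
        fix q :: rat assume q: "ereal (of_rat q) < Limsup (at_right 0) (dim_ratio M y)"
        show "ereal (of_rat q) \<le> Limsup (at_right 0) (\<lambda>r. hit_ratio T y r x)"
        proof (cases "0 < real_of_rat q")
          case True then show ?thesis using elim(1) q by blast
        next
          case False then have "ereal (of_rat q) \<le> 0" by simp
          then show ?thesis using hLs0[of y x] by (rule order_trans)
        qed
      qed
      moreover have "Limsup (at_right 0) (\<lambda>r. hit_ratio T y r x) \<le> Limsup (at_right 0) (dim_ratio M y)"
      proof (rule G_rat_le)
        fix q :: rat assume q: "Limsup (at_right 0) (dim_ratio M y) < ereal (of_rat q)"
        have q0: "0 < real_of_rat q" using dLs0[of y] q by (metis ereal_less(2) le_less_trans zero_ereal_def)
        show "Limsup (at_right 0) (\<lambda>r. hit_ratio T y r x) \<le> ereal (of_rat q)"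
        proof (rule ereal_le_epsilon2)
          fix e :: real assume e: "0 < e"
          obtain K :: nat where K: "ln 2 / e < real K" using reals_Archimedean2 by blast
          have "ln 2 / e < real (Suc K)" using K by simp
          then have "ln 2 < e * real (Suc K)" using e by (simp add: divide_less_eq mult.commute)
          then have "ln 2 / real (Suc K) < e" by (simp add: divide_less_eq mult.commute)
          then have "ereal (of_rat q + ln 2 / real (Suc K)) \<le> ereal (of_rat q) + ereal e" by simp
          moreover have "Limsup (at_right 0) (\<lambda>r. hit_ratio T y r x) \<le> ereal (of_rat q + ln 2 / real (Suc K))"
            using elim(2) q q0 by blast
          ultimately show "Limsup (at_right 0) (\<lambda>r. hit_ratio T y r x) \<le> ereal (of_rat q) + ereal e"
            by (rule order_trans[rotated])
        qed
      qed
      ultimately show ?case unfolding upper_local_dim_def by (rule antisym[rotated])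
    qed
    show "AE x in M. Liminf (at_right 0) (\<lambda>r. hit_ratio T y r x) = lower_local_dim M y \<and>
             Limsup (at_right 0) (\<lambda>r. hit_ratio T y r x) = upper_local_dim M y"
      using LIe LSe by eventually_elim auto
  next
    fix y
    assume H: "\<forall>y (r::nat \<Rightarrow> real). decseq r \<longrightarrow> (\<forall>n. r n > 0) \<longrightarrow>
          \<not> summable (\<lambda>n. measure M (cball y (r n))) \<longrightarrow>
          measure M {x. \<exists>\<^sub>\<infinity>n. (T ^^ n) x \<in> cball y (r n)} = 1"
    show "AE x in M. Liminf (at_right 0) (\<lambda>r. hit_ratio T y r x) = lower_local_dim M y"
    proof (rule liminf_eq)
      fix rr :: "nat \<Rightarrow> real"
      assume "decseq rr" "\<forall>n. rr n > 0" "\<not> summable (\<lambda>n. measure M (cball y (rr n)))"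
      then have "measure M {x. \<exists>\<^sub>\<infinity>n. (T ^^ n) x \<in> cball y (rr n)} = 1" using H by blast
      then have "AE x in M. x \<in> {x. \<exists>\<^sub>\<infinity>n. (T ^^ n) x \<in> cball y (rr n)}" by (rule AE_prob_1)
      then show "AE x in M. \<exists>\<^sub>\<infinity>n. (T ^^ n) x \<in> cball y (rr n)" by simp
    qed
  qed
qed

end
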